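(* Let $n,m\ge1$. If $\varphi\colon A\to B$ is a Frobenius $n$-homomorphism and $\gamma\colon A\to B$ is a Frobenius $m$-homomorphism, then $\varphi+\gamma$ is a Frobenius $(n+m)$-homomorphism; moreover $R_{\varphi+\gamma}(a,z)=R_\varphi(a,z)R_\gamma(a,z)$ for all $a\in A$.
   Context: $\mathbb{K}=\mathbb{R}$ or $\mathbb{C}$; $A$ and $B$ are commutative associative unital $\mathbb{K}$-algebras. For a $\mathbb{K}$-linear map $\varphi\colon A\to B$ and $a\in A$, the characteristic function is $R_\varphi(a,z)=\exp\bigl(\varphi(\ln(1+az))\bigr)\in B[[z]]$, with $\ln(1+az)=\sum_{k\ge1}(-1)^{k+1}a^kz^k/k$ and $\varphi$ applied coefficientwise. The Frobenius maps $\Phi_k\colon A^k\to B$ of $\varphi$ are defined by $\Phi_1=\varphi$ and $\Phi_{k+1}(a_1,\dots,a_{k+1})=\varphi(a_1)\Phi_k(a_2,\dots,a_{k+1})-\sum_{j=2}^{k+1}\Phi_k(a_2,\dots,a_{j-1},a_1a_j,a_{j+1},\dots,a_{k+1})$. A linear map $\varphi$ is a (Frobenius) $n$-homomorphism if $\varphi(1)=n\cdot1_B$ and $\Phi_k\equiv0$ for all $k\ge n+1$. *)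

theory Defs
  imports Complex_Main "HOL-Computational_Algebra.Formal_Power_Series"
begin

text \<open>Scalar field: real. Commutative associative unital algebras are modelled by the
  type class combination comm_ring_1 + real_algebra_1; linearity is real linearity.\<close>

text \<open>Frobenius maps: frob phi [a1,...,ak] is Phi_k(a1,...,ak) for k >= 1.
  The value at the empty list is an irrelevant convention (1, consistent with the recursion).\<close>
function frob :: "('a::comm_ring_1 \<Rightarrow> 'b::comm_ring_1) \<Rightarrow> 'a list \<Rightarrow> 'b" where
  "frob \<phi> [] = 1"
| "frob \<phi> [a] = \<phi> a"
| "frob \<phi> (a # b # rest) =
     \<phi> a * frob \<phi> (b # rest)
     - (\<Sum>j<length (b # rest). frob \<phi> ((b # rest)[j := a * (b # rest) ! j]))"
  by pat_completeness auto
termination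
  by (relation "measure (\<lambda>(_, xs). length xs)") (auto split: nat.split)

definition frobenius_hom :: "nat \<Rightarrow> ('a::{comm_ring_1,real_algebra_1} \<Rightarrow> 'b::{comm_ring_1,real_algebra_1}) \<Rightarrow> bool" where
  "frobenius_hom n \<phi> \<longleftrightarrow> linear \<phi> \<and> \<phi> 1 = of_nat n \<and> (\<forall>xs. length xs \<ge> n + 1 \<longrightarrow> frob \<phi> xs = 0)"

definition fps_ln1p :: "'a::{comm_ring_1,real_algebra_1} \<Rightarrow> 'a fps" where
  "fps_ln1p a = Abs_fps (\<lambda>k. if k = 0 then 0 else scaleR ((-1) ^ (k + 1) / real k) (a ^ k))"

text \<open>Exponential of a formal power series with zero constant term, sum_k f^k / k!
  (the sum is finite coefficientwise since f has zero constant term).\<close>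
definition fps_exp_alg :: "'b::{comm_ring_1,real_algebra_1} fps \<Rightarrow> 'b fps" where
  "fps_exp_alg f = Abs_fps (\<lambda>n. \<Sum>k\<le>n. scaleR (1 / fact k) (fps_nth (f ^ k) n))"

definition char_fun :: "('a::{comm_ring_1,real_algebra_1} \<Rightarrow> 'b::{comm_ring_1,real_algebra_1}) \<Rightarrow> 'a \<Rightarrow> 'b fps" where
  "char_fun \<phi> a = fps_exp_alg (Abs_fps (\<lambda>k. \<phi> (fps_nth (fps_ln1p a) k)))"

end

theory Submission
  imports Defs
begin
unbundle fps_syntax

lemma frob_cons: "frob \<phi> (a # ys) = \<phi> a * frob \<phi> ys - (\<Sum>j<length ys. frob \<phi> (ys[j := a * ys ! j]))"
  by (cases ys) auto

fun SP :: "('a list \<times> 'a list \<Rightarrow> 'b::comm_ring_1) \<Rightarrow> 'a list \<Rightarrow> 'b" where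
  "SP F [] = F ([], [])"
| "SP F (x # xs) = SP (\<lambda>p. F (x # fst p, snd p)) xs + SP (\<lambda>p. F (fst p, x # snd p)) xs"

lemma SP_cong: "(\<And>p. F p = G p) \<Longrightarrow> SP F xs = SP G xs"
  by (metis ext)

lemma SP_add: "SP (\<lambda>p. F p + G p) xs = SP F xs + SP G xs"
  by (induction xs arbitrary: F G) (auto simp: algebra_simps)
lemma SP_diff: "SP (\<lambda>p. F p - G p) xs = SP F xs - SP G xs"
  by (induction xs arbitrary: F G) (auto simp: algebra_simps)
lemma SP_mult: "SP (\<lambda>p. c * F p) xs = c * SP F xs"
  by (induction xs arbitrary: F) (auto simp: algebra_simps)
lemma SP_sum: "SP (\<lambda>p. \<Sum>j\<in>A. F j p) xs = (\<Sum>j\<in>A. SP (F j) xs)"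
  by (induction xs arbitrary: F) (auto simp: sum.distrib)
lemma SP_zero: "(\<And>l r. length l + length r = length xs \<Longrightarrow> F (l, r) = 0) \<Longrightarrow> SP F xs = 0"
proof (induction xs arbitrary: F)
  case Nil then show ?case by simp
next
  case (Cons x xs)
  have "SP (\<lambda>p. F (x # fst p, snd p)) xs = 0" by (rule Cons.IH) (simp add: Cons.prems)
  moreover have "SP (\<lambda>p. F (fst p, x # snd p)) xs = 0" by (rule Cons.IH) (simp add: Cons.prems)
  ultimately show ?case by simp
qed

lemma SP_upd:
  "(\<Sum>j<length ys. SP F (ys[j := f (ys ! j)])) =
   SP (\<lambda>p. (\<Sum>i<length (fst p). F ((fst p)[i := f (fst p ! i)], snd p))
          + (\<Sum>i<length (snd p). F (fst p, (snd p)[i := f (snd p ! i)]))) ys"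
proof (induction ys arbitrary: F)
  case Nil then show ?case by simp
next
  case (Cons x xs)
  let ?F1 = "\<lambda>p. F (x # fst p, snd p)" and ?F2 = "\<lambda>p. F (fst p, x # snd p)"
  have "(\<Sum>j<length (x#xs). SP F ((x#xs)[j := f ((x#xs) ! j)]))
      = SP F (f x # xs) + (\<Sum>j<length xs. SP F (x # xs[j := f (xs ! j)]))"
    by (subst length_Cons, subst sum.lessThan_Suc_shift) (simp del: SP.simps)
  also have "(\<Sum>j<length xs. SP F (x # xs[j := f (xs ! j)]))
     = (\<Sum>j<length xs. SP ?F1 (xs[j := f (xs ! j)])) + (\<Sum>j<length xs. SP ?F2 (xs[j := f (xs ! j)]))"
    by (simp add: sum.distrib)
  also have "\<dots> = SP (\<lambda>p. (\<Sum>i<length (fst p). ?F1 ((fst p)[i := f (fst p ! i)], snd p))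
          + (\<Sum>i<length (snd p). ?F1 (fst p, (snd p)[i := f (snd p ! i)]))) xs
       + SP (\<lambda>p. (\<Sum>i<length (fst p). ?F2 ((fst p)[i := f (fst p ! i)], snd p))
          + (\<Sum>i<length (snd p). ?F2 (fst p, (snd p)[i := f (snd p ! i)]))) xs"
    by (simp only: Cons.IH)
  finally show ?case
    by (simp add: sum.lessThan_Suc_shift SP_add algebra_simps del: sum.lessThan_Suc)
qed

lemma frob_sum:
  "frob (\<lambda>x. \<phi> x + \<gamma> x) xs = SP (\<lambda>p. frob \<phi> (fst p) * frob \<gamma> (snd p)) xs"
proof (induction "length xs" arbitrary: xs rule: less_induct)
  case less
  show ?case
  proof (cases xs)
    case Nil then show ?thesis by simp
  next
    case (Cons a ys)
    let ?G = "\<lambda>p. frob \<phi> (fst p) * frob \<gamma> (snd p)"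
    have IH1: "frob (\<lambda>x. \<phi> x + \<gamma> x) ys = SP ?G ys" using less Cons by simp
    have IH2: "\<And>j. frob (\<lambda>x. \<phi> x + \<gamma> x) (ys[j := a * ys ! j]) = SP ?G (ys[j := a * ys ! j])"
      using less Cons by simp
    have "frob (\<lambda>x. \<phi> x + \<gamma> x) xs = (\<phi> a + \<gamma> a) * SP ?G ys - (\<Sum>j<length ys. SP ?G (ys[j := a * ys ! j]))"
      using Cons by (simp add: frob_cons IH1 IH2 del: frob.simps)
    also have "(\<Sum>j<length ys. SP ?G (ys[j := a * ys ! j])) =
      SP (\<lambda>p. (\<Sum>i<length (fst p). ?G ((fst p)[i := a * (fst p ! i)], snd p))
          + (\<Sum>i<length (snd p). ?G (fst p, (snd p)[i := a * (snd p ! i)]))) ys"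
      by (rule SP_upd)
    also have "(\<phi> a + \<gamma> a) * SP ?G ys - \<dots> = SP (\<lambda>p. (\<phi> a + \<gamma> a) * ?G p - ((\<Sum>i<length (fst p). ?G ((fst p)[i := a * (fst p ! i)], snd p))
          + (\<Sum>i<length (snd p). ?G (fst p, (snd p)[i := a * (snd p ! i)])))) ys"
      by (simp add: SP_diff SP_mult)
    also have "\<dots> = SP (\<lambda>p. frob \<phi> (a # fst p) * frob \<gamma> (snd p)) ys + SP (\<lambda>p. frob \<phi> (fst p) * frob \<gamma> (a # snd p)) ys"
      unfolding SP_add[symmetric]
      by (rule SP_cong) (simp add: frob_cons sum_distrib_left sum_distrib_right algebra_simps del: frob.simps)
    also have "\<dots> = SP ?G xs" using Cons by simp
    finally show ?thesis .
  qed
qed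
definition low :: "nat \<Rightarrow> 'a::comm_ring_1 fps \<Rightarrow> bool" where
  "low k h \<longleftrightarrow> (\<forall>j<k. h $ j = 0)"

lemma low_mult: "low a f \<Longrightarrow> low b g \<Longrightarrow> low (a + b) (f * g)"
  unfolding low_def fps_mult_nth
proof (intro allI impI sum.neutral ballI)
  fix j i assume A: "\<forall>j<a. f $ j = 0" and B: "\<forall>j<b. g $ j = 0" and j: "j < a + b" and i: "i \<in> {0..j}"
  show "f $ i * g $ (j - i) = 0"
  proof (cases "i < a")
    case True then show ?thesis using A by simp
  next
    case False then have "j - i < b" using j i by auto
    then show ?thesis using B by simp
  qed
qed

lemma low_pow: "f $ 0 = 0 \<Longrightarrow> low k (f ^ k)"
proof (induction k)
  case 0 then show ?case by (simp add: low_def)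
next
  case (Suc k)
  have "low 1 f" using Suc.prems by (simp add: low_def)
  from low_mult[OF this Suc.IH[OF Suc.prems]] show ?case by simp
qed

abbreviation cc :: "nat \<Rightarrow> 'b::{comm_ring_1,real_algebra_1}" where
  "cc k \<equiv> of_real (1 / fact k)"

lemma exp_nth: "fps_exp_alg f $ n = (\<Sum>k\<le>n. cc k * (f ^ k) $ n)"
  by (simp add: fps_exp_alg_def scaleR_conv_of_real)

lemma exp_nth_ext:
  assumes "f $ 0 = 0" "n \<le> N"
  shows "fps_exp_alg f $ n = (\<Sum>k\<le>N. cc k * (f ^ k) $ n)"
  unfolding exp_nth
proof (rule sum.mono_neutral_left)
  show "\<forall>i\<in>{..N} - {..n}. cc i * (f ^ i) $ n = 0"
    using low_pow[OF assms(1)] by (auto simp: low_def)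
qed (use assms in auto)

lemma exp_add:
  fixes F G :: "'b::{comm_ring_1,real_algebra_1} fps"
  assumes F0: "F $ 0 = 0" and G0: "G $ 0 = 0"
  shows "fps_exp_alg (F + G) = fps_exp_alg F * fps_exp_alg G"
proof (rule fps_ext)
  fix N
  let ?t = "\<lambda>k l. cc k * cc l * (F ^ k * G ^ l) $ N"
  have "(fps_exp_alg F * fps_exp_alg G) $ N
     = (\<Sum>i=0..N. (\<Sum>k\<le>N. cc k * (F ^ k) $ i) * (\<Sum>l\<le>N. cc l * (G ^ l) $ (N - i)))"
    unfolding fps_mult_nth
    by (rule sum.cong) (auto simp: exp_nth_ext[OF F0] exp_nth_ext[OF G0 diff_le_self])
  also have "\<dots> = (\<Sum>i=0..N. \<Sum>k\<le>N. \<Sum>l\<le>N. cc k * (F ^ k) $ i * (cc l * (G ^ l) $ (N - i)))"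
    by (simp only: sum_product)
  also have "\<dots> = (\<Sum>k\<le>N. \<Sum>i=0..N. \<Sum>l\<le>N. cc k * (F ^ k) $ i * (cc l * (G ^ l) $ (N - i)))"
    by (rule sum.swap)
  also have "\<dots> = (\<Sum>k\<le>N. \<Sum>l\<le>N. \<Sum>i=0..N. cc k * (F ^ k) $ i * (cc l * (G ^ l) $ (N - i)))"
    by (rule sum.cong[OF refl], rule sum.swap)
  also have "\<dots> = (\<Sum>k\<le>N. \<Sum>l\<le>N. ?t k l)"
    by (simp add: fps_mult_nth sum_distrib_left mult_ac)
  also have "\<dots> = (\<Sum>(k,l)\<in>{..N}\<times>{..N}. ?t k l)"
    by (simp add: sum.cartesian_product)
  also have "\<dots> = (\<Sum>(k,l)\<in>{(k,l). k + l \<le> N}. ?t k l)"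
  proof (rule sum.mono_neutral_right)
    show "\<forall>i\<in>{..N} \<times> {..N} - {(k, l). k + l \<le> N}. (case i of (k, l) \<Rightarrow> ?t k l) = 0"
    proof
      fix x assume x: "x \<in> {..N} \<times> {..N} - {(k, l). k + l \<le> N}"
      obtain k l where kl: "x = (k, l)" by force
      from x kl have "N < k + l" by auto
      with low_mult[OF low_pow[OF F0, of k] low_pow[OF G0, of l]]
      show "(case x of (k, l) \<Rightarrow> ?t k l) = 0" by (simp add: low_def kl)
    qed
  qed auto
  also have "\<dots> = (\<Sum>p\<le>N. \<Sum>k\<le>p. ?t k (p - k))"
    by (rule sum.triangle_reindex_eq)
  also have "\<dots> = (\<Sum>p\<le>N. cc p * ((F + G) ^ p) $ N)"
  proof (rule sum.cong[OF refl])
    fix p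
    have "cc p * ((F + G) ^ p) $ N = (\<Sum>k\<le>p. cc p * of_nat (p choose k) * (F ^ k * G ^ (p - k)) $ N)"
      unfolding binomial_ring fps_sum_nth sum_distrib_left
      by (rule sum.cong) (simp_all add: fps_of_nat[symmetric] mult.assoc)
    also have "\<dots> = (\<Sum>k\<le>p. ?t k (p - k))"
    proof (rule sum.cong[OF refl])
      fix k assume "k \<in> {..p}"
      then have kp: "k \<le> p" by simp
      have "(1 / fact p) * real (p choose k) = (1 / fact k) * (1 / fact (p - k))"
        using binomial_fact[OF kp, where 'a=real] by (simp add: field_simps)
      then have "(cc p :: 'b) * of_nat (p choose k) = cc k * cc (p - k)"
        by (metis of_real_mult of_real_of_nat_eq)
      then show "cc p * of_nat (p choose k) * (F ^ k * G ^ (p - k)) $ N = ?t k (p - k)"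
        by simp
    qed
    finally show "(\<Sum>k\<le>p. ?t k (p - k)) = cc p * ((F + G) ^ p) $ N" by simp
  qed
  also have "\<dots> = fps_exp_alg (F + G) $ N" by (simp add: exp_nth)
  finally show "fps_exp_alg (F + G) $ N = (fps_exp_alg F * fps_exp_alg G) $ N" by simp
qed

theorem mainTheorem8:
  fixes \<phi> \<gamma> :: "'a::{comm_ring_1,real_algebra_1} \<Rightarrow> 'b::{comm_ring_1,real_algebra_1}"
    and n m :: nat
  assumes "n \<ge> 1" and "m \<ge> 1"
    and "frobenius_hom n \<phi>" and "frobenius_hom m \<gamma>"
  shows "frobenius_hom (n + m) (\<lambda>x. \<phi> x + \<gamma> x)
         \<and> (\<forall>a. char_fun (\<lambda>x. \<phi> x + \<gamma> x) a = char_fun \<phi> a * char_fun \<gamma> a)"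
proof
  have lp: "linear \<phi>" and p1: "\<phi> 1 = of_nat n" and pz: "\<And>xs. length xs \<ge> n + 1 \<Longrightarrow> frob \<phi> xs = 0"
    using assms(3) by (auto simp: frobenius_hom_def)
  have lg: "linear \<gamma>" and g1: "\<gamma> 1 = of_nat m" and gz: "\<And>xs. length xs \<ge> m + 1 \<Longrightarrow> frob \<gamma> xs = 0"
    using assms(4) by (auto simp: frobenius_hom_def)
  show "frobenius_hom (n + m) (\<lambda>x. \<phi> x + \<gamma> x)"
    unfolding frobenius_hom_def
  proof (intro conjI allI impI)
    show "linear (\<lambda>x. \<phi> x + \<gamma> x)" using lp lg by (rule linear_compose_add)
    show "\<phi> 1 + \<gamma> 1 = of_nat (n + m)" using p1 g1 by simp
    fix xs :: "'a list" assume len: "n + m + 1 \<le> length xs"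
    show "frob (\<lambda>x. \<phi> x + \<gamma> x) xs = 0"
      unfolding frob_sum
    proof (rule SP_zero)
      fix l r :: "'a list" assume "length l + length r = length xs"
      with len have "length l \<ge> n + 1 \<or> length r \<ge> m + 1" by linarith
      then show "frob \<phi> (fst (l, r)) * frob \<gamma> (snd (l, r)) = 0" using pz gz by auto
    qed
  qed
  show "\<forall>a. char_fun (\<lambda>x. \<phi> x + \<gamma> x) a = char_fun \<phi> a * char_fun \<gamma> a"
  proof
    fix a
    let ?F = "Abs_fps (\<lambda>k. \<phi> (fps_ln1p a $ k))" and ?G = "Abs_fps (\<lambda>k. \<gamma> (fps_ln1p a $ k))"
    have l0: "fps_ln1p a $ 0 = 0" by (simp add: fps_ln1p_def)
    have F0: "?F $ 0 = 0" using l0 linear_0[OF lp] by simp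
    have G0: "?G $ 0 = 0" using l0 linear_0[OF lg] by simp
    have "Abs_fps (\<lambda>k. \<phi> (fps_ln1p a $ k) + \<gamma> (fps_ln1p a $ k)) = ?F + ?G"
      by (rule fps_ext) simp
    then show "char_fun (\<lambda>x. \<phi> x + \<gamma> x) a = char_fun \<phi> a * char_fun \<gamma> a"
      unfolding char_fun_def by (simp add: exp_add[OF F0 G0])
  qed
qed

end
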